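(* Let $s\in I(\Phi)$. If $C$ is an S-chamber for $s$, then $\mathcal B^s_\bullet(C)=\mathcal B(C)\cap\Phi^s_\bullet$ is a basis of simple roots of the root system $\Phi^s_\bullet$. Moreover, for every Weyl chamber $C'$ of the root system $\Phi^s_\bullet$ there is an S-chamber $C$ for $s$ with $\mathcal B(C)\cap\Phi^s_\bullet=\mathcal B(C')$.
   Context: $\Phi$ is a reduced crystallographic root system spanning a real Euclidean space $V$; $I(\Phi)$ is the set of orthogonal involutions of $V$ preserving $\Phi$. For $s\in I(\Phi)$: $\Phi^s_\bullet=\{\alpha:s\alpha=-\alpha\}$ (a root subsystem), $\Phi^s_\circ=\{\alpha:s\alpha=\alpha\}$, $\Phi^s_\star=\Phi\setminus(\Phi^s_\circ\cup\Phi^s_\bullet)$. For a Weyl chamber $C$ of $\Phi$ (connected component of the complement of the root hyperplanes), $\Phi^+(C)$ is its set of positive roots and $\mathcal B(C)$ its simple roots. $C$ is an S-chamber for $s$ if $s(\Phi^+(C)\cap\Phi^s_\star)\subseteq\Phi^+(C)$. *)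

theory Defs
  imports "HOL-Analysis.Analysis"
begin

definition root_system :: "'a::euclidean_space set \<Rightarrow> bool" where
  "root_system \<Phi> \<longleftrightarrow>
     finite \<Phi> \<and> 0 \<notin> \<Phi> \<and> span \<Phi> = UNIV \<and>
     (\<forall>\<alpha>\<in>\<Phi>. \<forall>\<beta>\<in>\<Phi>. \<beta> - (2 * (\<beta> \<bullet> \<alpha>) / (\<alpha> \<bullet> \<alpha>)) *\<^sub>R \<alpha> \<in> \<Phi>) \<and>
     (\<forall>\<alpha>\<in>\<Phi>. \<forall>\<beta>\<in>\<Phi>. 2 * (\<beta> \<bullet> \<alpha>) / (\<alpha> \<bullet> \<alpha>) \<in> \<int>) \<and>
     (\<forall>\<alpha>\<in>\<Phi>. \<forall>c::real. c *\<^sub>R \<alpha> \<in> \<Phi> \<longrightarrow> c = 1 \<or> c = -1)"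

definition root_involutions :: "'a::euclidean_space set \<Rightarrow> ('a \<Rightarrow> 'a) set" where
  "root_involutions \<Phi> =
     {s. orthogonal_transformation s \<and> (\<forall>x. s (s x) = x) \<and> s ` \<Phi> = \<Phi>}"

definition Phi_bullet :: "('a::real_vector \<Rightarrow> 'a) \<Rightarrow> 'a set \<Rightarrow> 'a set" where
  "Phi_bullet s \<Phi> = {\<alpha>\<in>\<Phi>. s \<alpha> = - \<alpha>}"

definition Phi_circ :: "('a::real_vector \<Rightarrow> 'a) \<Rightarrow> 'a set \<Rightarrow> 'a set" where
  "Phi_circ s \<Phi> = {\<alpha>\<in>\<Phi>. s \<alpha> = \<alpha>}"

definition Phi_star :: "('a::real_vector \<Rightarrow> 'a) \<Rightarrow> 'a set \<Rightarrow> 'a set" where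
  "Phi_star s \<Phi> = \<Phi> - (Phi_circ s \<Phi> \<union> Phi_bullet s \<Phi>)"

definition regular_set :: "'a::euclidean_space set \<Rightarrow> 'a set \<Rightarrow> 'a set" where
  "regular_set R W = W - (\<Union>\<alpha>\<in>R. {x. \<alpha> \<bullet> x = 0})"

definition weyl_chambers :: "'a::euclidean_space set \<Rightarrow> 'a set \<Rightarrow> 'a set set" where
  "weyl_chambers R W =
     {connected_component_set (regular_set R W) x | x. x \<in> regular_set R W}"

definition positive_roots :: "'a::euclidean_space set \<Rightarrow> 'a set \<Rightarrow> 'a set" where
  "positive_roots R C = {\<alpha>\<in>R. \<forall>x\<in>C. 0 < \<alpha> \<bullet> x}"

definition simple_roots :: "'a::euclidean_space set \<Rightarrow> 'a set \<Rightarrow> 'a set" where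
  "simple_roots R C = {\<alpha>\<in>positive_roots R C.
      \<not> (\<exists>\<beta>\<in>positive_roots R C. \<exists>\<gamma>\<in>positive_roots R C. \<alpha> = \<beta> + \<gamma>)}"

definition S_chamber :: "'a::euclidean_space set \<Rightarrow> ('a \<Rightarrow> 'a) \<Rightarrow> 'a set \<Rightarrow> bool" where
  "S_chamber \<Phi> s C \<longleftrightarrow> C \<in> weyl_chambers \<Phi> UNIV \<and>
     s ` (positive_roots \<Phi> C \<inter> Phi_star s \<Phi>) \<subseteq> positive_roots \<Phi> C"

end

theory Submission
  imports Defs
begin

lemma sign_const:
  fixes a :: "'a::euclidean_space"
  assumes "connected S" "x0 \<in> S" "\<forall>x\<in>S. a \<bullet> x \<noteq> 0" "a \<bullet> x0 > 0" "x \<in> S"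
  shows "a \<bullet> x > 0"
proof (rule ccontr)
  assume "\<not> a \<bullet> x > 0"
  then have "a \<bullet> x \<le> 0" by simp
  from connected_ivt_hyperplane[OF assms(1) assms(5) assms(2), of a 0] this assms(4)
  obtain z where "z \<in> S" "a \<bullet> z = 0" by auto
  with assms(3) show False by auto
qed

lemma pos_iff:
  assumes "x \<in> regular_set R W" "\<alpha> \<in> R"
  shows "\<alpha> \<in> positive_roots R (connected_component_set (regular_set R W) x) \<longleftrightarrow> \<alpha> \<bullet> x > 0"
proof -
  let ?C = "connected_component_set (regular_set R W) x"
  have xC: "x \<in> ?C" using assms(1) by (simp add: connected_component_refl)
  have nz: "\<forall>z\<in>?C. \<alpha> \<bullet> z \<noteq> 0"
  proof
    fix z assume "z \<in> ?C"
    then have "z \<in> regular_set R W" using connected_component_subset by blast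
    then show "\<alpha> \<bullet> z \<noteq> 0" using assms(2) unfolding regular_set_def by auto
  qed
  have cC: "connected ?C" by (rule connected_connected_component)
  show ?thesis
  proof
    assume "\<alpha> \<in> positive_roots R ?C"
    then show "\<alpha> \<bullet> x > 0" using xC unfolding positive_roots_def by auto
  next
    assume h: "\<alpha> \<bullet> x > 0"
    have "\<alpha> \<bullet> z > 0" if "z \<in> ?C" for z
      using sign_const[OF cC xC nz h that] .
    then show "\<alpha> \<in> positive_roots R ?C"
      using assms(2) unfolding positive_roots_def by auto
  qed
qed

lemma key:
  assumes lin: "linear s" and inv: "\<forall>x. s (s x) = x" and sP: "s ` \<Phi> = \<Phi>" and z: "0 \<notin> \<Phi>"
    and x0: "x0 \<in> C"
    and Pb: "positive_roots (Phi_bullet s \<Phi>) C' = positive_roots \<Phi> C \<inter> Phi_bullet s \<Phi>"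
    and Sc: "s ` (positive_roots \<Phi> C \<inter> Phi_star s \<Phi>) \<subseteq> positive_roots \<Phi> C"
  shows "simple_roots \<Phi> C \<inter> Phi_bullet s \<Phi> = simple_roots (Phi_bullet s \<Phi>) C'"
proof
  show "simple_roots \<Phi> C \<inter> Phi_bullet s \<Phi> \<subseteq> simple_roots (Phi_bullet s \<Phi>) C'"
    using Pb unfolding simple_roots_def by blast
next
  show "simple_roots (Phi_bullet s \<Phi>) C' \<subseteq> simple_roots \<Phi> C \<inter> Phi_bullet s \<Phi>"
  proof
    fix \<alpha> assume a: "\<alpha> \<in> simple_roots (Phi_bullet s \<Phi>) C'"
    let ?P = "positive_roots \<Phi> C" and ?B = "Phi_bullet s \<Phi>"
    have aP: "\<alpha> \<in> ?P" "\<alpha> \<in> ?B" using a Pb unfolding simple_roots_def by auto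
    have aphi: "\<alpha> \<in> \<Phi>" "s \<alpha> = - \<alpha>" using aP(2) unfolding Phi_bullet_def by auto
    have ax: "\<alpha> \<bullet> x0 > 0" using aP(1) x0 unfolding positive_roots_def by auto
    have nd: "\<not> (\<exists>\<beta>\<in>?P \<inter> ?B. \<exists>\<gamma>\<in>?P \<inter> ?B. \<alpha> = \<beta> + \<gamma>)"
      using a Pb unfolding simple_roots_def by auto
    have sphi: "s v \<in> \<Phi>" if "v \<in> \<Phi>" for v using sP that by blast
    have "\<not> (\<exists>\<beta>\<in>?P. \<exists>\<gamma>\<in>?P. \<alpha> = \<beta> + \<gamma>)"
    proof
      assume "\<exists>\<beta>\<in>?P. \<exists>\<gamma>\<in>?P. \<alpha> = \<beta> + \<gamma>"
      then obtain \<beta> \<gamma> where bg: "\<beta> \<in> ?P" "\<gamma> \<in> ?P" "\<alpha> = \<beta> + \<gamma>" by blast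
      have bphi: "\<beta> \<in> \<Phi>" "\<beta> \<bullet> x0 > 0" using bg(1) x0 unfolding positive_roots_def by auto
      have gphi: "\<gamma> \<in> \<Phi>" "\<gamma> \<bullet> x0 > 0" using bg(2) x0 unfolding positive_roots_def by auto
      have "s \<alpha> = s \<beta> + s \<gamma>" using bg(3) linear_add[OF lin] by simp
      then have sa: "s \<beta> + s \<gamma> = - \<alpha>" using aphi(2) by simp
      have pos_s: "s v \<bullet> x0 > 0" if "v \<in> ?P" "s v \<noteq> v" "s v \<noteq> - v" for v
      proof -
        have "v \<in> Phi_star s \<Phi>" using that unfolding Phi_star_def Phi_circ_def Phi_bullet_def
            positive_roots_def by auto
        then have "s v \<in> ?P" using Sc that(1) by blast
        then show ?thesis using x0 unfolding positive_roots_def by auto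
      qed
      show False
      proof (cases "s \<beta> = - \<beta>")
        case True
        then have "s \<gamma> = - \<gamma>" 
        proof -
          have "s \<gamma> = - \<alpha> - s \<beta>" using sa by (simp add: eq_diff_eq add.commute)
          then show ?thesis using True bg(3) by simp
        qed
        then show False using nd bg True bphi gphi unfolding Phi_bullet_def by auto
      next
        case nb: False
        show False
        proof (cases "s \<gamma> = - \<gamma>")
          case True
          then have "s \<beta> = - \<beta>"
          proof -
            have "s \<beta> = - \<alpha> - s \<gamma>" using sa by (simp add: eq_diff_eq)
            then show ?thesis using True bg(3) by simp
          qed
          then show False using nb by simp
        next
          case ng: False
          show False
          proof (cases "s \<beta> = \<beta>")
            case bc: True
            then have sg: "s \<gamma> = - \<alpha> - \<beta>" using sa by (simp add: algebra_simps)
            have "s \<gamma> \<noteq> \<gamma>"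
            proof
              assume hg: "s \<gamma> = \<gamma>"
              have "\<gamma> = s \<gamma>" using hg by (rule sym)
              also have "\<dots> = - \<alpha> - \<beta>" by (rule sg)
              finally have "\<gamma> = - \<alpha> - \<beta>" .
              then have bga: "\<beta> + \<gamma> = - \<alpha>" by (simp add: algebra_simps)
              have "\<alpha> = \<beta> + \<gamma>" by (rule bg(3))
              also have "\<dots> = - \<alpha>" by (rule bga)
              finally have aa: "\<alpha> = - \<alpha>" .
              have "\<alpha> \<bullet> \<alpha> = \<alpha> \<bullet> (- \<alpha>)" using arg_cong[OF aa, of "\<lambda>v. \<alpha> \<bullet> v"] by simp
              then have "\<alpha> \<bullet> \<alpha> = 0" by simp
              then have "\<alpha> = 0" by simp
              then show False using aphi z by simp
            qed
            then have "s \<gamma> \<bullet> x0 > 0" using pos_s bg(2) ng by blast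
            moreover have "s \<gamma> \<bullet> x0 = - (\<alpha> \<bullet> x0) - \<beta> \<bullet> x0" using sg by (simp add: inner_diff_left)
            ultimately show False using ax bphi by linarith
          next
            case bnc: False
            have sb: "s \<beta> \<bullet> x0 > 0" using pos_s bg(1) bnc nb by blast
            show False
            proof (cases "s \<gamma> = \<gamma>")
              case True
              then have sg: "s \<beta> = - \<alpha> - \<gamma>" using sa by (simp add: algebra_simps)
              have "s \<beta> \<bullet> x0 = - (\<alpha> \<bullet> x0) - \<gamma> \<bullet> x0" using sg by (simp add: inner_diff_left)
              then show False using sb ax gphi by linarith
            next
              case False
              have "s \<gamma> \<bullet> x0 > 0" using pos_s bg(2) ng False by blast
              moreover have "s \<beta> \<bullet> x0 + s \<gamma> \<bullet> x0 = - (\<alpha> \<bullet> x0)"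
                using sa inner_add_left[of "s \<beta>" "s \<gamma>" x0] by simp
              ultimately show False using sb ax by linarith
            qed
          qed
        qed
      qed
    qed
    then show "\<alpha> \<in> simple_roots \<Phi> C \<inter> Phi_bullet s \<Phi>"
      using aP unfolding simple_roots_def by blast
  qed
qed

lemma avoid:
  fixes A :: "'a::euclidean_space set"
  assumes "finite A" "0 \<notin> A"
  shows "\<exists>w. \<forall>a\<in>A. a \<bullet> w \<noteq> 0"
  using assms
proof (induction A rule: finite_induct)
  case empty
  then show ?case by simp
next
  case (insert a A)
  then obtain w where w: "\<forall>b\<in>A. b \<bullet> w \<noteq> 0" by auto
  have a0: "a \<noteq> 0" using insert by auto
  define F where "F = insert (- (a \<bullet> w) / (a \<bullet> a)) ((\<lambda>b. - (b \<bullet> w) / (b \<bullet> a)) ` A)"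
  have "finite F" unfolding F_def using insert by auto
  then obtain t where t: "t \<notin> F" using ex_new_if_finite[OF infinite_UNIV_char_0] by blast
  have "\<forall>b\<in>insert a A. b \<bullet> (w + t *\<^sub>R a) \<noteq> 0"
  proof
    fix b assume b: "b \<in> insert a A"
    show "b \<bullet> (w + t *\<^sub>R a) \<noteq> 0"
    proof
      assume h: "b \<bullet> (w + t *\<^sub>R a) = 0"
      then have h2: "b \<bullet> w + t * (b \<bullet> a) = 0" by (simp add: inner_add_right)
      show False
      proof (cases "b = a")
        case True
        have "a \<bullet> a \<noteq> 0" using a0 by simp
        then have "t = - (a \<bullet> w) / (a \<bullet> a)" using h2 True by (simp add: field_simps)
        then show False using t unfolding F_def by auto
      next
        case False
        then have bA: "b \<in> A" using b by auto
        then have "b \<bullet> a \<noteq> 0" using h2 w by auto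
        then have "t = - (b \<bullet> w) / (b \<bullet> a)" using h2 by (simp add: field_simps)
        then show False using t bA unfolding F_def by auto
      qed
    qed
  qed
  then show ?case by blast
qed

lemma abs_lemma:
  fixes a c t :: real
  assumes "\<bar>c\<bar> < t * \<bar>a\<bar>"
  shows "t * a + c \<noteq> 0 \<and> (t * a + c > 0 \<longleftrightarrow> a > 0)"
proof (cases "a > 0")
  case True
  then show ?thesis using assms by (simp add: abs_if split: if_splits)
next
  case False
  then show ?thesis using assms by (cases "a = 0") (auto simp: abs_if split: if_splits)
qed

theorem proposition2p32:
  fixes \<Phi> :: "'a::euclidean_space set" and s :: "'a \<Rightarrow> 'a"
  assumes "root_system \<Phi>"
    and "s \<in> root_involutions \<Phi>"
  shows "(\<forall>C. S_chamber \<Phi> s C \<longrightarrow>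
            (\<exists>C'\<in>weyl_chambers (Phi_bullet s \<Phi>) (span (Phi_bullet s \<Phi>)).
               simple_roots \<Phi> C \<inter> Phi_bullet s \<Phi> = simple_roots (Phi_bullet s \<Phi>) C'))
       \<and> (\<forall>C'\<in>weyl_chambers (Phi_bullet s \<Phi>) (span (Phi_bullet s \<Phi>)).
            \<exists>C. S_chamber \<Phi> s C \<and>
               simple_roots \<Phi> C \<inter> Phi_bullet s \<Phi> = simple_roots (Phi_bullet s \<Phi>) C')"
proof -
  let ?B = "Phi_bullet s \<Phi>" and ?W = "span (Phi_bullet s \<Phi>)"
  have fin: "finite \<Phi>" and z: "0 \<notin> \<Phi>" using assms(1) unfolding root_system_def by auto
  have ot: "orthogonal_transformation s" and inv: "\<forall>x. s (s x) = x" and sP: "s ` \<Phi> = \<Phi>"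
    using assms(2) unfolding root_involutions_def by auto
  have lin: "linear s" using ot orthogonal_transformation by blast
  have pres: "s v \<bullet> s w = v \<bullet> w" for v w using ot orthogonal_transformation_def by auto
  have Bsub: "?B \<subseteq> \<Phi>" unfolding Phi_bullet_def by auto
  have part1: "\<exists>C'\<in>weyl_chambers ?B ?W. simple_roots \<Phi> C \<inter> ?B = simple_roots ?B C'"
    if SC: "S_chamber \<Phi> s C" for C
  proof -
    from SC obtain x0 where x0: "x0 \<in> regular_set \<Phi> UNIV"
      and C: "C = connected_component_set (regular_set \<Phi> UNIV) x0"
      unfolding S_chamber_def weyl_chambers_def by auto
    obtain p q where p: "p \<in> ?W" and q: "\<And>w. w \<in> ?W \<Longrightarrow> orthogonal q w" and xpq: "x0 = p + q"
      using orthogonal_subspace_decomp_exists by blast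
    have ip: "\<alpha> \<bullet> p = \<alpha> \<bullet> x0" if "\<alpha> \<in> ?B" for \<alpha>
    proof -
      have "\<alpha> \<in> ?W" using that span_base by blast
      then have "q \<bullet> \<alpha> = 0" using q unfolding orthogonal_def by blast
      then show ?thesis using xpq by (simp add: inner_add_right inner_commute)
    qed
    have preg: "p \<in> regular_set ?B ?W"
      using p x0 ip Bsub unfolding regular_set_def by fastforce
    define C' where "C' = connected_component_set (regular_set ?B ?W) p"
    have C'w: "C' \<in> weyl_chambers ?B ?W" unfolding C'_def weyl_chambers_def using preg by blast
    have Pb: "positive_roots ?B C' = positive_roots \<Phi> C \<inter> ?B"
    proof (intro set_eqI iffI)
      fix \<alpha> assume h: "\<alpha> \<in> positive_roots ?B C'"
      then have aB: "\<alpha> \<in> ?B" unfolding positive_roots_def by auto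
      then have "\<alpha> \<bullet> p > 0" using h pos_iff[OF preg aB] C'_def by simp
      then show "\<alpha> \<in> positive_roots \<Phi> C \<inter> ?B"
        using pos_iff[OF x0, of \<alpha>] aB Bsub ip C by auto
    next
      fix \<alpha> assume h: "\<alpha> \<in> positive_roots \<Phi> C \<inter> ?B"
      then have aB: "\<alpha> \<in> ?B" by auto
      then have "\<alpha> \<bullet> x0 > 0" using h pos_iff[OF x0, of \<alpha>] Bsub C by auto
      then show "\<alpha> \<in> positive_roots ?B C'"
        using pos_iff[OF preg aB] C'_def ip aB by simp
    qed
    have "simple_roots \<Phi> C \<inter> ?B = simple_roots ?B C'"
      apply (rule key[OF lin inv sP z _ Pb])
      using x0 C connected_component_refl apply blast
      using SC unfolding S_chamber_def by blast
    then show ?thesis using C'w by blast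
  qed
  have part2: "\<exists>C. S_chamber \<Phi> s C \<and> simple_roots \<Phi> C \<inter> ?B = simple_roots ?B C'"
    if C'w: "C' \<in> weyl_chambers ?B ?W" for C'
  proof -
    from C'w obtain y where yreg: "y \<in> regular_set ?B ?W"
      and C': "C' = connected_component_set (regular_set ?B ?W) y"
      unfolding weyl_chambers_def by auto
    have sphi: "s v \<in> \<Phi>" if "v \<in> \<Phi>" for v using sP that by blast
    have sadj: "v \<bullet> s w = s v \<bullet> w" for v w using pres[of v "s w"] inv by simp
    let ?N = "(\<lambda>\<beta>. \<beta> + s \<beta>) ` (\<Phi> - ?B)"
    have "0 \<notin> ?N"
    proof
      assume "0 \<in> ?N"
      then obtain \<beta> where "\<beta> \<in> \<Phi> - ?B" "\<beta> + s \<beta> = 0" by auto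
      then have "s \<beta> = - \<beta>" "\<beta> \<in> \<Phi>" "\<beta> \<notin> ?B" by (auto simp: add_eq_0_iff)
      then show False unfolding Phi_bullet_def by auto
    qed
    moreover have "finite ?N" using fin by simp
    ultimately obtain w where w: "\<forall>a\<in>?N. a \<bullet> w \<noteq> 0" using avoid[of ?N] by blast
    define u where "u = w + s w"
    have bu: "\<beta> \<bullet> u = (\<beta> + s \<beta>) \<bullet> w" for \<beta>
      unfolding u_def by (simp add: inner_add_right inner_add_left sadj)
    have sbu: "s \<beta> \<bullet> u = \<beta> \<bullet> u" for \<beta>
      using bu[of "s \<beta>"] bu[of \<beta>] inv by (simp add: add.commute)
    have Bu: "\<alpha> \<bullet> u = 0" if "\<alpha> \<in> ?B" for \<alpha>
      using that bu[of \<alpha>] unfolding Phi_bullet_def by simp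
    have nBu: "\<beta> \<bullet> u \<noteq> 0" if "\<beta> \<in> \<Phi> - ?B" for \<beta>
      using that bu[of \<beta>] w by auto
    have snB: "s \<beta> \<in> \<Phi> - ?B" if "\<beta> \<in> \<Phi> - ?B" for \<beta>
    proof -
      have "s \<beta> \<in> \<Phi>" using that sphi by auto
      moreover have "s (s \<beta>) \<noteq> - s \<beta>"
      proof
        assume "s (s \<beta>) = - s \<beta>"
        then have "s \<beta> = - \<beta>" using inv by (metis minus_minus)
        then show False using that unfolding Phi_bullet_def by auto
      qed
      ultimately show ?thesis unfolding Phi_bullet_def by auto
    qed
    define t where "t = 1 + (\<Sum>\<beta>\<in>\<Phi>. \<bar>\<beta> \<bullet> y\<bar> / \<bar>\<beta> \<bullet> u\<bar>)"
    have tb: "\<bar>\<beta> \<bullet> y\<bar> < t * \<bar>\<beta> \<bullet> u\<bar>" if "\<beta> \<in> \<Phi> - ?B" for \<beta>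
    proof -
      have "\<bar>\<beta> \<bullet> y\<bar> / \<bar>\<beta> \<bullet> u\<bar> \<le> (\<Sum>\<beta>\<in>\<Phi>. \<bar>\<beta> \<bullet> y\<bar> / \<bar>\<beta> \<bullet> u\<bar>)"
        by (rule member_le_sum) (use that fin in auto)
      then have "\<bar>\<beta> \<bullet> y\<bar> / \<bar>\<beta> \<bullet> u\<bar> < t" unfolding t_def by linarith
      moreover have "\<bar>\<beta> \<bullet> u\<bar> > 0" using nBu that by auto
      ultimately show ?thesis by (simp add: divide_less_eq mult.commute)
    qed
    define x where "x = t *\<^sub>R u + y"
    have bx: "\<beta> \<bullet> x = t * (\<beta> \<bullet> u) + \<beta> \<bullet> y" for \<beta>
      unfolding x_def by (simp add: inner_add_right)
    have nBx: "\<beta> \<bullet> x \<noteq> 0 \<and> (\<beta> \<bullet> x > 0 \<longleftrightarrow> \<beta> \<bullet> u > 0)" if "\<beta> \<in> \<Phi> - ?B" for \<beta>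
      using abs_lemma[OF tb[OF that]] bx by simp
    have Bx: "\<alpha> \<bullet> x = \<alpha> \<bullet> y" if "\<alpha> \<in> ?B" for \<alpha>
      using bx Bu[OF that] by simp
    have yB: "\<alpha> \<bullet> y \<noteq> 0" if "\<alpha> \<in> ?B" for \<alpha>
      using yreg that unfolding regular_set_def by auto
    have xreg: "x \<in> regular_set \<Phi> UNIV"
    proof -
      have "\<alpha> \<bullet> x \<noteq> 0" if "\<alpha> \<in> \<Phi>" for \<alpha>
        using that nBx Bx yB by (cases "\<alpha> \<in> ?B") auto
      then show ?thesis unfolding regular_set_def by auto
    qed
    define C where "C = connected_component_set (regular_set \<Phi> UNIV) x"
    have Sc: "s ` (positive_roots \<Phi> C \<inter> Phi_star s \<Phi>) \<subseteq> positive_roots \<Phi> C"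
    proof
      fix v assume "v \<in> s ` (positive_roots \<Phi> C \<inter> Phi_star s \<Phi>)"
      then obtain \<beta> where b: "\<beta> \<in> positive_roots \<Phi> C" "\<beta> \<in> Phi_star s \<Phi>" "v = s \<beta>" by auto
      have bnb: "\<beta> \<in> \<Phi> - ?B" using b(2) unfolding Phi_star_def by auto
      have "\<beta> \<bullet> x > 0" using b(1) pos_iff[OF xreg, of \<beta>] bnb C_def by auto
      then have "\<beta> \<bullet> u > 0" using nBx[OF bnb] by simp
      then have "s \<beta> \<bullet> u > 0" using sbu by simp
      then have "s \<beta> \<bullet> x > 0" using nBx[OF snB[OF bnb]] by simp
      then show "v \<in> positive_roots \<Phi> C"
        using pos_iff[OF xreg, of "s \<beta>"] snB[OF bnb] b(3) C_def by auto
    qed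
    have SC: "S_chamber \<Phi> s C"
      unfolding S_chamber_def weyl_chambers_def C_def using Sc xreg C_def by blast
    have Pb: "positive_roots ?B C' = positive_roots \<Phi> C \<inter> ?B"
    proof (intro set_eqI iffI)
      fix \<alpha> assume h: "\<alpha> \<in> positive_roots ?B C'"
      then have aB: "\<alpha> \<in> ?B" unfolding positive_roots_def by auto
      then have "\<alpha> \<bullet> y > 0" using h pos_iff[OF yreg aB] C' by simp
      then show "\<alpha> \<in> positive_roots \<Phi> C \<inter> ?B"
        using pos_iff[OF xreg, of \<alpha>] aB Bsub Bx C_def by auto
    next
      fix \<alpha> assume h: "\<alpha> \<in> positive_roots \<Phi> C \<inter> ?B"
      then have aB: "\<alpha> \<in> ?B" by auto
      then have "\<alpha> \<bullet> x > 0" using h pos_iff[OF xreg, of \<alpha>] Bsub C_def by auto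
      then show "\<alpha> \<in> positive_roots ?B C'"
        using pos_iff[OF yreg aB] C' Bx aB by simp
    qed
    have "simple_roots \<Phi> C \<inter> ?B = simple_roots ?B C'"
      apply (rule key[OF lin inv sP z _ Pb Sc])
      using xreg C_def connected_component_refl by blast
    then show ?thesis using SC by blast
  qed
  show ?thesis using part1 part2 by blast
qed

end
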